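(* Let $\mathbf{P}=(p_{i,j})_{i,j=0}^{d}$, $d\ge 1$, be the transition matrix of an ergodic (irreducible and aperiodic) discrete-time Markov chain on the finite state space $\{0,1,\dots,d\}$ whose eigenvalues are all simple, and let $\boldsymbol{\pi}=(\pi_0,\dots,\pi_d)$ be its stationary distribution. Let $Y_1,Y_2,\dots,Y_{W+1}$ ($W\ge 1$) be the chain started in stationarity ($Y_1\sim\boldsymbol{\pi}$), and for states $i,j$ let $N_{i,j}=\sum_{t=1}^{W}\mathbf{1}_{\{Y_t=i,\,Y_{t+1}=j\}}$. Write $\mathbf{P}=\mathbf{U}\,\mathrm{diag}(\lambda_0,\dots,\lambda_d)\,\mathbf{U}^{-1}$, where $\lambda_0=1$, the columns of $\mathbf{U}=(u_{jr})$ are right eigenvectors, $v_{ri}$ denotes the $(r,i)$ entry of $\mathbf{U}^{-1}$, and the non-unit eigenvalues are indexed so that $|1-\lambda_1|\le|1-\lambda_r|$ for all $r=1,\dots,d$. Define $c_{j,i}=\sum_{r=1}^{d}|u_{jr}v_{ri}|$. Then for all states $i,j$: $$\mathrm{Var}\!\left[\frac{N_{i,j}}{W}\right]\le \pi_i p_{i,j}\left(\frac{1-\pi_i p_{i,j}}{W}+2p_{i,j}c_{j,i}\frac{2+W|1-\lambda_1|}{W^2|1-\lambda_1|^2}\right),$$ and for all states $i$ and $j\neq j'$: $$\mathrm{Cov}\!\left[\frac{N_{i,j}}{W},\frac{N_{i,j'}}{W}\right]\le \pi_i p_{i,j}p_{i,j'}\left(-\frac{\pi_i}{W}+(c_{j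,i}+c_{j',i})\frac{2+W|1-\lambda_1|}{W^2|1-\lambda_1|^2}\right).$$
   Context: Here $\mathbf{1}_{\{\cdot\}}$ is the indicator function. The quantities $c_{j,i}$ do not depend on the scaling chosen for the eigenvectors. *)

theory Defs
  imports Complex_Main "Jordan_Normal_Form.Matrix" "HOL-Library.FuncSet"
begin

definition stochastic_mat :: "nat \<Rightarrow> real mat \<Rightarrow> bool" where
  "stochastic_mat d P \<longleftrightarrow> P \<in> carrier_mat (d+1) (d+1) \<and>
     (\<forall>i\<le>d. \<forall>j\<le>d. P $$ (i,j) \<ge> 0) \<and>
     (\<forall>i\<le>d. (\<Sum>j\<le>d. P $$ (i,j)) = 1)"

definition irreducible_mc :: "nat \<Rightarrow> real mat \<Rightarrow> bool" where
  "irreducible_mc d P \<longleftrightarrow> (\<forall>i\<le>d. \<forall>j\<le>d. \<exists>n. (P ^\<^sub>m n) $$ (i,j) > 0)"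

definition aperiodic_mc :: "nat \<Rightarrow> real mat \<Rightarrow> bool" where
  "aperiodic_mc d P \<longleftrightarrow> (\<forall>i\<le>d. Gcd {n::nat. n \<ge> 1 \<and> (P ^\<^sub>m n) $$ (i,i) > 0} = 1)"

definition ergodic_mc :: "nat \<Rightarrow> real mat \<Rightarrow> bool" where
  "ergodic_mc d P \<longleftrightarrow> stochastic_mat d P \<and> irreducible_mc d P \<and> aperiodic_mc d P"

definition stationary_dist :: "nat \<Rightarrow> real mat \<Rightarrow> (nat \<Rightarrow> real) \<Rightarrow> bool" where
  "stationary_dist d P \<pi> \<longleftrightarrow> (\<forall>i\<le>d. \<pi> i \<ge> 0) \<and> (\<Sum>i\<le>d. \<pi> i) = 1 \<and>
     (\<forall>j\<le>d. (\<Sum>i\<le>d. \<pi> i * P $$ (i,j)) = \<pi> j)"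

text \<open>Sample paths (Y_1,...,Y_{W+1}) are represented as y 0, ..., y W.\<close>
definition paths :: "nat \<Rightarrow> nat \<Rightarrow> (nat \<Rightarrow> nat) set" where
  "paths d W = {0..W} \<rightarrow>\<^sub>E {0..d}"

definition path_prob :: "real mat \<Rightarrow> (nat \<Rightarrow> real) \<Rightarrow> nat \<Rightarrow> (nat \<Rightarrow> nat) \<Rightarrow> real" where
  "path_prob P \<pi> W y = \<pi> (y 0) * (\<Prod>t<W. P $$ (y t, y (Suc t)))"

definition mc_expect :: "nat \<Rightarrow> real mat \<Rightarrow> (nat \<Rightarrow> real) \<Rightarrow> nat \<Rightarrow> ((nat \<Rightarrow> nat) \<Rightarrow> real) \<Rightarrow> real" where
  "mc_expect d P \<pi> W f = (\<Sum>y\<in>paths d W. path_prob P \<pi> W y * f y)"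

definition mc_cov :: "nat \<Rightarrow> real mat \<Rightarrow> (nat \<Rightarrow> real) \<Rightarrow> nat \<Rightarrow> ((nat \<Rightarrow> nat) \<Rightarrow> real) \<Rightarrow> ((nat \<Rightarrow> nat) \<Rightarrow> real) \<Rightarrow> real" where
  "mc_cov d P \<pi> W f g = mc_expect d P \<pi> W (\<lambda>y. f y * g y) - mc_expect d P \<pi> W f * mc_expect d P \<pi> W g"

definition mc_var :: "nat \<Rightarrow> real mat \<Rightarrow> (nat \<Rightarrow> real) \<Rightarrow> nat \<Rightarrow> ((nat \<Rightarrow> nat) \<Rightarrow> real) \<Rightarrow> real" where
  "mc_var d P \<pi> W f = mc_cov d P \<pi> W f f"

definition trans_count :: "nat \<Rightarrow> nat \<Rightarrow> nat \<Rightarrow> (nat \<Rightarrow> nat) \<Rightarrow> real" where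
  "trans_count W i j y = (\<Sum>t<W. if y t = i \<and> y (Suc t) = j then 1 else 0)"

definition diag_cmat :: "nat \<Rightarrow> (nat \<Rightarrow> complex) \<Rightarrow> complex mat" where
  "diag_cmat n ev = mat n n (\<lambda>(i,j). if i = j then ev i else 0)"

end

theory Submission
  imports Defs
begin

lemma sum_PiE_split:
  assumes "x \<notin> S"
  shows "(\<Sum>y\<in>Pi\<^sub>E (insert x S) T. F y) = (\<Sum>b\<in>T x. \<Sum>y\<in>Pi\<^sub>E S T. F (y(x:=b)))"
proof -
  have "(\<Sum>y\<in>Pi\<^sub>E (insert x S) T. F y) = (\<Sum>p\<in>T x \<times> Pi\<^sub>E S T. F ((\<lambda>(y, g). g(x := y)) p))"
    unfolding PiE_insert_eq by (rule sum.reindex[OF inj_combinator[OF assms], unfolded comp_def])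
  also have "\<dots> = (\<Sum>b\<in>T x. \<Sum>y\<in>Pi\<^sub>E S T. F (y(x:=b)))"
    by (simp add: sum.cartesian_product case_prod_beta)
  finally show ?thesis .
qed

fun fw :: "nat \<Rightarrow> (nat\<Rightarrow>real) \<Rightarrow> (nat\<Rightarrow>nat\<Rightarrow>nat\<Rightarrow>real) \<Rightarrow> nat \<Rightarrow> nat \<Rightarrow> real" where
  "fw d f0 M 0 b = f0 b"
| "fw d f0 M (Suc n) b = (\<Sum>a\<le>d. fw d f0 M n a * M n a b)"

lemma pathsum:
  "(\<Sum>y\<in>({0..n} \<rightarrow>\<^sub>E {0..d}). f0 (y 0) * (\<Prod>t<n. M t (y t) (y (Suc t))) * h (y n))
   = (\<Sum>b\<le>d. fw d f0 M n b * h b)"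
proof (induction n arbitrary: h)
  case 0
  have "{0..0::nat} = insert 0 {}" by auto
  then show ?case
    by (simp add: sum_PiE_split atLeast0AtMost)
next
  case (Suc n)
  have e: "{0..Suc n} = insert (Suc n) {0..n}" by auto
  have "(\<Sum>y\<in>({0..Suc n} \<rightarrow>\<^sub>E {0..d}). f0 (y 0) * (\<Prod>t<Suc n. M t (y t) (y (Suc t))) * h (y (Suc n)))
     = (\<Sum>b\<in>{0..d}. \<Sum>y\<in>({0..n} \<rightarrow>\<^sub>E {0..d}). f0 (y 0) * (\<Prod>t<n. M t (y t) (y (Suc t))) * (M n (y n) b * h b))"
    unfolding e
    apply (subst sum_PiE_split, simp)
    apply (rule sum.cong[OF refl])+
    apply (simp add: algebra_simps)
    done
  also have "\<dots> = (\<Sum>y\<in>({0..n} \<rightarrow>\<^sub>E {0..d}). f0 (y 0) * (\<Prod>t<n. M t (y t) (y (Suc t))) * (\<Sum>b\<le>d. M n (y n) b * h b))"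
    by (subst sum.swap) (simp add: sum_distrib_left atLeast0AtMost)
  also have "\<dots> = (\<Sum>a\<le>d. fw d f0 M n a * (\<Sum>b\<le>d. M n a b * h b))"
    by (rule Suc.IH)
  also have "\<dots> = (\<Sum>b\<le>d. fw d f0 M (Suc n) b * h b)"
    by (simp add: sum_distrib_left sum_distrib_right algebra_simps, subst sum.swap, simp)
  finally show ?case .
qed

fun Pk :: "nat \<Rightarrow> real mat \<Rightarrow> nat \<Rightarrow> nat \<Rightarrow> nat \<Rightarrow> real" where
  "Pk d P 0 a b = (if a = b then 1 else 0)"
| "Pk d P (Suc k) a b = (\<Sum>c\<le>d. Pk d P k a c * P $$ (c,b))"

lemma fw_const:
  assumes "\<And>u a b. n0 \<le> u \<Longrightarrow> u < n0 + k \<Longrightarrow> M u a b = P $$ (a,b)" "b \<le> d"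
  shows "fw d f0 M (n0+k) b = (\<Sum>a\<le>d. fw d f0 M n0 a * Pk d P k a b)"
  using assms
proof (induction k arbitrary: b)
  case 0
  then show ?case by (simp add: if_distrib cong: if_cong)
next
  case (Suc k)
  have "fw d f0 M (n0 + Suc k) b = (\<Sum>c\<le>d. fw d f0 M (n0+k) c * P $$ (c,b))"
    using Suc.prems by simp
  also have "\<dots> = (\<Sum>c\<le>d. (\<Sum>a\<le>d. fw d f0 M n0 a * Pk d P k a c) * P $$ (c,b))"
    using Suc by simp
  also have "\<dots> = (\<Sum>a\<le>d. fw d f0 M n0 a * Pk d P (Suc k) a b)"
    by (simp add: sum_distrib_left sum_distrib_right mult.assoc, subst sum.swap, simp)
  finally show ?case .
qed

lemma stat_Pk:
  assumes "stationary_dist d P \<pi>" "b \<le> d"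
  shows "(\<Sum>a\<le>d. \<pi> a * Pk d P k a b) = \<pi> b"
  using assms(2)
proof (induction k arbitrary: b)
  case 0
  then show ?case by (simp add: if_distrib cong: if_cong)
next
  case (Suc k)
  have "(\<Sum>a\<le>d. \<pi> a * Pk d P (Suc k) a b) = (\<Sum>c\<le>d. (\<Sum>a\<le>d. \<pi> a * Pk d P k a c) * P $$ (c,b))"
    by (simp add: sum_distrib_left sum_distrib_right mult.assoc, subst sum.swap, simp)
  also have "\<dots> = (\<Sum>c\<le>d. \<pi> c * P $$ (c,b))"
    using Suc.IH by simp
  also have "\<dots> = \<pi> b" using assms(1) Suc.prems unfolding stationary_dist_def by simp
  finally show ?case .
qed

lemma row_Pk:
  assumes "stochastic_mat d P" "a \<le> d"
  shows "(\<Sum>b\<le>d. Pk d P k a b) = 1"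
proof (induction k)
  case 0
  then show ?case using assms(2) by simp
next
  case (Suc k)
  have "(\<Sum>b\<le>d. Pk d P (Suc k) a b) = (\<Sum>c\<le>d. Pk d P k a c * (\<Sum>b\<le>d. P $$ (c,b)))"
    by (simp add: sum_distrib_left, subst sum.swap, simp)
  also have "\<dots> = (\<Sum>c\<le>d. Pk d P k a c)"
    using assms(1) unfolding stochastic_mat_def by simp
  finally show ?case using Suc by simp
qed

lemma fw_special:
  assumes "\<And>a b. M n a b = P $$ (a,b) * (if a = i \<and> b = j then c else 0)" "i \<le> d"
  shows "fw d f0 M (Suc n) b = (if b = j then fw d f0 M n i * P $$ (i,j) * c else 0)"
proof -
  have "fw d f0 M (Suc n) b = (\<Sum>a\<le>d. fw d f0 M n a * (P $$ (a,b) * (if a = i \<and> b = j then c else 0)))"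
    by (simp add: assms(1))
  also have "\<dots> = (\<Sum>a\<le>d. (if a = i then (if b = j then fw d f0 M n i * P $$ (i,j) * c else 0) else 0))"
    by (rule sum.cong) auto
  also have "\<dots> = (if b = j then fw d f0 M n i * P $$ (i,j) * c else 0)"
    using assms(2) by simp
  finally show ?thesis .
qed

lemma sum_if_mult: "(j::nat) \<le> d \<Longrightarrow> (\<Sum>a\<le>d. (if a = j then c else 0) * f a) = (c::real) * f j"
  by (subst sum.cong[OF refl, of _ _ "\<lambda>a. if a = j then c * f j else 0"]) auto

definition X :: "nat \<Rightarrow> nat \<Rightarrow> nat \<Rightarrow> (nat \<Rightarrow> nat) \<Rightarrow> real" where
  "X s i j y = (if y s = i \<and> y (Suc s) = j then 1 else 0)"

definition MM :: "real mat \<Rightarrow> nat \<Rightarrow> nat \<Rightarrow> nat \<Rightarrow> nat \<Rightarrow> nat \<Rightarrow> nat \<Rightarrow> nat \<Rightarrow> nat \<Rightarrow> real" where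
  "MM P s t i j j' u a b = P $$ (a,b) * (if u = s then (if a = i \<and> b = j then 1 else 0) else 1)
      * (if u = t then (if a = i \<and> b = j' then 1 else 0) else 1)"

lemma expect_as_fw:
  assumes "s < W" "t < W"
  shows "mc_expect d P \<pi> W (\<lambda>y. X s i j y * X t i j' y) = (\<Sum>b\<le>d. fw d \<pi> (MM P s t i j j') W b)"
proof -
  have "mc_expect d P \<pi> W (\<lambda>y. X s i j y * X t i j' y)
     = (\<Sum>y\<in>({0..W} \<rightarrow>\<^sub>E {0..d}). \<pi> (y 0) * (\<Prod>u<W. MM P s t i j j' u (y u) (y (Suc u))) * (\<lambda>_. 1) (y W))"
    unfolding mc_expect_def paths_def path_prob_def MM_def
    by (rule sum.cong[OF refl]) (simp add: prod.distrib prod.delta assms X_def)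
  also have "\<dots> = (\<Sum>b\<le>d. fw d \<pi> (MM P s t i j j') W b)"
    by (subst pathsum) simp
  finally show ?thesis .
qed

lemma expect_lt:
  assumes st: "stochastic_mat d P" and sd: "stationary_dist d P \<pi>"
    and "s < t" "t < W" "i \<le> d" "j \<le> d" "j' \<le> d"
  shows "mc_expect d P \<pi> W (\<lambda>y. X s i j y * X t i j' y) = \<pi> i * P $$ (i,j) * Pk d P (t-s-1) j i * P $$ (i,j')"
proof -
  let ?M = "MM P s t i j j'"
  have c1: "\<And>u a b. 0 \<le> u \<Longrightarrow> u < 0 + s \<Longrightarrow> ?M u a b = P $$ (a,b)"
    using assms by (simp add: MM_def)
  have f1: "fw d \<pi> ?M s b = \<pi> b" if "b \<le> d" for b
    using fw_const[of 0 s ?M P, OF c1 that] stat_Pk[OF sd that] by simp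
  have f2: "fw d \<pi> ?M (Suc s) b = (if b = j then \<pi> i * P $$ (i,j) else 0)" for b
    by (subst fw_special[where i=i and j=j and c=1 and P=P]) (use assms f1 in \<open>auto simp: MM_def\<close>)
  have c2: "\<And>u a b. Suc s \<le> u \<Longrightarrow> u < Suc s + (t - Suc s) \<Longrightarrow> ?M u a b = P $$ (a,b)"
    using assms by (simp add: MM_def)
  have f3: "fw d \<pi> ?M t b = \<pi> i * P $$ (i,j) * Pk d P (t-s-1) j b" if "b \<le> d" for b
  proof -
    have "fw d \<pi> ?M t b = fw d \<pi> ?M (Suc s + (t - Suc s)) b" using assms by simp
    also have "\<dots> = (\<Sum>a\<le>d. fw d \<pi> ?M (Suc s) a * Pk d P (t - Suc s) a b)"
      by (rule fw_const[OF c2 that])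
    also have "\<dots> = \<pi> i * P $$ (i,j) * Pk d P (t-s-1) j b"
      unfolding f2 using assms by (simp add: sum_if_mult)
    finally show ?thesis .
  qed
  have f4: "fw d \<pi> ?M (Suc t) b = (if b = j' then \<pi> i * P $$ (i,j) * Pk d P (t-s-1) j i * P $$ (i,j') else 0)" for b
    by (subst fw_special[where i=i and j=j' and c=1 and P=P]) (use assms f3 in \<open>auto simp: MM_def\<close>)
  have c3: "\<And>u a b. Suc t \<le> u \<Longrightarrow> u < Suc t + (W - Suc t) \<Longrightarrow> ?M u a b = P $$ (a,b)"
    using assms by (simp add: MM_def)
  have f5: "fw d \<pi> ?M W b = \<pi> i * P $$ (i,j) * Pk d P (t-s-1) j i * P $$ (i,j') * Pk d P (W - Suc t) j' b" if "b \<le> d" for b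
  proof -
    have "fw d \<pi> ?M W b = fw d \<pi> ?M (Suc t + (W - Suc t)) b" using assms by simp
    also have "\<dots> = (\<Sum>a\<le>d. fw d \<pi> ?M (Suc t) a * Pk d P (W - Suc t) a b)"
      by (rule fw_const[OF c3 that])
    also have "\<dots> = \<pi> i * P $$ (i,j) * Pk d P (t-s-1) j i * P $$ (i,j') * Pk d P (W - Suc t) j' b"
      unfolding f4 using assms by (simp add: sum_if_mult)
    finally show ?thesis .
  qed
  have "(\<Sum>b\<le>d. fw d \<pi> ?M W b) = (\<Sum>b\<le>d. \<pi> i * P $$ (i,j) * Pk d P (t-s-1) j i * P $$ (i,j') * Pk d P (W - Suc t) j' b)"
    by (rule sum.cong) (simp_all add: f5)
  also have "\<dots> = \<pi> i * P $$ (i,j) * Pk d P (t-s-1) j i * P $$ (i,j')"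
    by (simp add: sum_distrib_left[symmetric] row_Pk[OF st assms(7)])
  finally show ?thesis
    unfolding expect_as_fw[OF less_trans[OF assms(3,4)] assms(4)] .
qed

lemma expect_eq:
  assumes st: "stochastic_mat d P" and sd: "stationary_dist d P \<pi>"
    and "s < W" "i \<le> d" "j \<le> d" "j' \<le> d"
  shows "mc_expect d P \<pi> W (\<lambda>y. X s i j y * X s i j' y) = (if j = j' then \<pi> i * P $$ (i,j) else 0)"
proof -
  let ?M = "MM P s s i j j'"
  have c1: "\<And>u a b. 0 \<le> u \<Longrightarrow> u < 0 + s \<Longrightarrow> ?M u a b = P $$ (a,b)"
    using assms by (simp add: MM_def)
  have f1: "fw d \<pi> ?M s b = \<pi> b" if "b \<le> d" for b
    using fw_const[of 0 s ?M P, OF c1 that] stat_Pk[OF sd that] by simp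
  have f2: "fw d \<pi> ?M (Suc s) b = (if b = j then \<pi> i * P $$ (i,j) * (if j = j' then 1 else 0) else 0)" for b
    by (subst fw_special[where i=i and j=j and c="if j = j' then 1 else 0" and P=P]) (use assms f1 in \<open>auto simp: MM_def\<close>)
  have c3: "\<And>u a b. Suc s \<le> u \<Longrightarrow> u < Suc s + (W - Suc s) \<Longrightarrow> ?M u a b = P $$ (a,b)"
    using assms by (simp add: MM_def)
  have f5: "fw d \<pi> ?M W b = \<pi> i * P $$ (i,j) * (if j = j' then 1 else 0) * Pk d P (W - Suc s) j b" if "b \<le> d" for b
  proof -
    have "fw d \<pi> ?M W b = fw d \<pi> ?M (Suc s + (W - Suc s)) b" using assms by simp
    also have "\<dots> = (\<Sum>a\<le>d. fw d \<pi> ?M (Suc s) a * Pk d P (W - Suc s) a b)"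
      by (rule fw_const[OF c3 that])
    also have "\<dots> = \<pi> i * P $$ (i,j) * (if j = j' then 1 else 0) * Pk d P (W - Suc s) j b"
      unfolding f2 using assms by (simp add: sum_if_mult)
    finally show ?thesis .
  qed
  have "(\<Sum>b\<le>d. fw d \<pi> ?M W b) = (\<Sum>b\<le>d. \<pi> i * P $$ (i,j) * (if j = j' then 1 else 0) * Pk d P (W - Suc s) j b)"
    by (rule sum.cong) (simp_all add: f5)
  also have "\<dots> = (if j = j' then \<pi> i * P $$ (i,j) else 0)"
    by (simp add: sum_distrib_left[symmetric] row_Pk[OF st assms(5)])
  finally show ?thesis
    unfolding expect_as_fw[OF assms(3) assms(3)] .
qed

lemma mult_entry:
  assumes "A \<in> carrier_mat n m" "B \<in> carrier_mat m p" "i < n" "j < p"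
  shows "(A * B) $$ (i,j) = (\<Sum>k<m. A $$ (i,k) * B $$ (k,j))"
  using assms by (simp add: scalar_prod_def atLeast0LessThan)

lemma sum_only0: "(\<And>r. r \<le> d \<Longrightarrow> r \<noteq> 0 \<Longrightarrow> g r = 0) \<Longrightarrow> (\<Sum>r\<le>(d::nat). g r) = g 0"
  by (subst sum.cong[OF refl, of _ _ "\<lambda>r. if r = 0 then g 0 else 0"]) auto

lemma sum_delta_mult: "b \<le> d \<Longrightarrow> (\<Sum>a\<le>(d::nat). f a * (if a = b then 1 else 0)) = (f b :: 'a::comm_ring_1)"
  by (subst sum.cong[OF refl, of _ _ "\<lambda>a. if a = b then f b else 0"]) auto

locale LA =
  fixes d :: nat and P :: "real mat" and \<pi> :: "nat \<Rightarrow> real"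
    and U V :: "complex mat" and lam :: "nat \<Rightarrow> complex"
  assumes st: "stochastic_mat d P"
    and stat: "stationary_dist d P \<pi>"
    and U: "U \<in> carrier_mat (d+1) (d+1)" and V: "V \<in> carrier_mat (d+1) (d+1)"
    and UV: "U * V = 1\<^sub>m (d+1)" and VU: "V * U = 1\<^sub>m (d+1)"
    and decomp: "map_mat complex_of_real P = U * diag_cmat (d+1) lam * V"
    and simple: "inj_on lam {0..d}"
    and lam0: "lam 0 = 1"
begin

abbreviation "Pc \<equiv> map_mat complex_of_real P"
abbreviation "D \<equiv> diag_cmat (d+1) lam"

lemma Pcar: "P \<in> carrier_mat (d+1) (d+1)" using st unfolding stochastic_mat_def by auto
lemma Dcar: "D \<in> carrier_mat (d+1) (d+1)" unfolding diag_cmat_def by simp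

lemma VP: "V * Pc = D * V"
proof -
  have "V * Pc = V * ((U * D) * V)" by (simp only: decomp)
  also have "\<dots> = (V * (U * D)) * V" by (rule assoc_mult_mat[symmetric, OF V mult_carrier_mat[OF U Dcar] V])
  also have "\<dots> = ((V * U) * D) * V" by (simp only: assoc_mult_mat[OF V U Dcar])
  also have "\<dots> = D * V" by (simp only: VU left_mult_one_mat[OF Dcar])
  finally show ?thesis .
qed

lemma PU: "Pc * U = U * D"
proof -
  have "Pc * U = ((U * D) * V) * U" by (simp only: decomp)
  also have "\<dots> = (U * D) * (V * U)" by (rule assoc_mult_mat[OF mult_carrier_mat[OF U Dcar] V U])
  also have "\<dots> = U * D" by (simp only: VU right_mult_one_mat[OF mult_carrier_mat[OF U Dcar]])
  finally show ?thesis .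
qed

lemma E1: "r \<le> d \<Longrightarrow> b \<le> d \<Longrightarrow> (\<Sum>a\<le>d. V $$ (r,a) * of_real (P $$ (a,b))) = lam r * V $$ (r,b)"
proof -
  assume r: "r \<le> d" and b: "b \<le> d"
  have "(V * Pc) $$ (r,b) = (\<Sum>a<d+1. V $$ (r,a) * Pc $$ (a,b))"
    by (rule mult_entry[OF V]) (use Pcar r b in auto)
  also have "\<dots> = (\<Sum>a\<le>d. V $$ (r,a) * of_real (P $$ (a,b)))"
    using Pcar b by (simp add: lessThan_Suc_atMost)
  finally have 1: "(V * Pc) $$ (r,b) = \<dots>" .
  have "(D * V) $$ (r,b) = (\<Sum>k<d+1. D $$ (r,k) * V $$ (k,b))"
    by (rule mult_entry[OF Dcar V]) (use r b in auto)
  also have "\<dots> = (\<Sum>k<d+1. (if k = r then lam r * V $$ (r,b) else 0))"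
    by (rule sum.cong) (use r in \<open>auto simp: diag_cmat_def\<close>)
  also have "\<dots> = lam r * V $$ (r,b)" using r by simp
  finally show ?thesis using 1 VP by simp
qed

lemma E2: "a \<le> d \<Longrightarrow> r \<le> d \<Longrightarrow> (\<Sum>b\<le>d. of_real (P $$ (a,b)) * U $$ (b,r)) = U $$ (a,r) * lam r"
proof -
  assume r: "r \<le> d" and a: "a \<le> d"
  have "(Pc * U) $$ (a,r) = (\<Sum>b<d+1. Pc $$ (a,b) * U $$ (b,r))"
    by (rule mult_entry[OF _ U]) (use Pcar r a in auto)
  also have "\<dots> = (\<Sum>b\<le>d. of_real (P $$ (a,b)) * U $$ (b,r))"
    using Pcar a by (simp add: lessThan_Suc_atMost)
  finally have 1: "(Pc * U) $$ (a,r) = \<dots>" .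
  have "(U * D) $$ (a,r) = (\<Sum>k<d+1. U $$ (a,k) * D $$ (k,r))"
    by (rule mult_entry[OF U Dcar]) (use r a in auto)
  also have "\<dots> = (\<Sum>k<d+1. (if k = r then U $$ (a,r) * lam r else 0))"
    by (rule sum.cong) (use r in \<open>auto simp: diag_cmat_def\<close>)
  also have "\<dots> = U $$ (a,r) * lam r" using r by simp
  finally show ?thesis using 1 PU by simp
qed

lemma E3: "a \<le> d \<Longrightarrow> b \<le> d \<Longrightarrow> (\<Sum>r\<le>d. U $$ (a,r) * V $$ (r,b)) = (if a = b then 1 else 0)"
proof -
  assume a: "a \<le> d" and b: "b \<le> d"
  have "(U * V) $$ (a,b) = (\<Sum>r<d+1. U $$ (a,r) * V $$ (r,b))"
    by (rule mult_entry[OF U V]) (use a b in auto)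
  moreover have "(U * V) $$ (a,b) = (if a = b then 1 else 0)" using UV a b by simp
  ultimately show ?thesis by (simp add: lessThan_Suc_atMost)
qed

lemma E4: "r \<le> d \<Longrightarrow> s \<le> d \<Longrightarrow> (\<Sum>a\<le>d. V $$ (r,a) * U $$ (a,s)) = (if r = s then 1 else 0)"
proof -
  assume a: "r \<le> d" and b: "s \<le> d"
  have "(V * U) $$ (r,s) = (\<Sum>a<d+1. V $$ (r,a) * U $$ (a,s))"
    by (rule mult_entry[OF V U]) (use a b in auto)
  moreover have "(V * U) $$ (r,s) = (if r = s then 1 else 0)" using VU a b by simp
  ultimately show ?thesis by (simp add: lessThan_Suc_atMost)
qed

lemma Pk_formula:
  assumes "a \<le> d" "b \<le> d"
  shows "complex_of_real (Pk d P k a b) = (\<Sum>r\<le>d. U $$ (a,r) * lam r ^ k * V $$ (r,b))"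
  using assms(2)
proof (induction k arbitrary: b)
  case 0
  then show ?case using E3[OF assms(1) 0] by simp
next
  case (Suc k)
  have "complex_of_real (Pk d P (Suc k) a b) = (\<Sum>c\<le>d. of_real (Pk d P k a c) * of_real (P $$ (c,b)))"
    by simp
  also have "\<dots> = (\<Sum>c\<le>d. (\<Sum>r\<le>d. U $$ (a,r) * lam r ^ k * V $$ (r,c)) * of_real (P $$ (c,b)))"
    using Suc.IH by simp
  also have "\<dots> = (\<Sum>r\<le>d. U $$ (a,r) * lam r ^ k * (\<Sum>c\<le>d. V $$ (r,c) * of_real (P $$ (c,b))))"
    by (simp add: sum_distrib_left sum_distrib_right mult.assoc, subst sum.swap, simp)
  also have "\<dots> = (\<Sum>r\<le>d. U $$ (a,r) * lam r ^ Suc k * V $$ (r,b))"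
    by (rule sum.cong) (use E1 Suc.prems in \<open>auto simp: algebra_simps\<close>)
  finally show ?case .
qed

lemma lam_ne1: "r \<le> d \<Longrightarrow> r \<noteq> 0 \<Longrightarrow> lam r \<noteq> 1"
  using simple lam0 unfolding inj_on_def by (metis atLeastAtMost_iff le0)

lemma r0_term:
  assumes "a \<le> d" "b \<le> d"
  shows "U $$ (a,0) * V $$ (0,b) = complex_of_real (\<pi> b)"
proof -
  define \<alpha> where "\<alpha> r = (\<Sum>a\<le>d. of_real (\<pi> a) * U $$ (a,r))" for r
  define \<beta> where "\<beta> r = (\<Sum>b\<le>d. V $$ (r,b))" for r
  have piP: "(\<Sum>a\<le>d. of_real (\<pi> a) * of_real (P $$ (a,b))) = complex_of_real (\<pi> b)" if "b \<le> d" for b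
  proof -
    have "(\<Sum>a\<le>d. \<pi> a * P $$ (a,b)) = \<pi> b" using stat that unfolding stationary_dist_def by auto
    then have "complex_of_real (\<Sum>a\<le>d. \<pi> a * P $$ (a,b)) = of_real (\<pi> b)" by simp
    then show ?thesis by simp
  qed
  have rowP: "(\<Sum>b\<le>d. complex_of_real (P $$ (a,b))) = 1" if "a \<le> d" for a
  proof -
    have "(\<Sum>b\<le>d. P $$ (a,b)) = 1" using st that unfolding stochastic_mat_def by auto
    then have "complex_of_real (\<Sum>b\<le>d. P $$ (a,b)) = 1" by simp
    then show ?thesis by simp
  qed
  have a0: "\<alpha> r = 0" if "r \<le> d" "r \<noteq> 0" for r
  proof -
    have "\<alpha> r * lam r = (\<Sum>a\<le>d. of_real (\<pi> a) * (\<Sum>b\<le>d. of_real (P $$ (a,b)) * U $$ (b,r)))"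
      unfolding \<alpha>_def using E2 that by (simp add: sum_distrib_right mult.assoc)
    also have "\<dots> = (\<Sum>b\<le>d. (\<Sum>a\<le>d. of_real (\<pi> a) * of_real (P $$ (a,b))) * U $$ (b,r))"
      by (simp add: sum_distrib_left sum_distrib_right mult.assoc, subst sum.swap, simp)
    also have "\<dots> = \<alpha> r" unfolding \<alpha>_def using piP by simp
    finally have "\<alpha> r * (lam r - 1) = 0" by (simp add: algebra_simps)
    then show ?thesis using lam_ne1[OF that] by simp
  qed
  have b0: "\<beta> r = 0" if "r \<le> d" "r \<noteq> 0" for r
  proof -
    have "lam r * \<beta> r = (\<Sum>b\<le>d. (\<Sum>a\<le>d. V $$ (r,a) * of_real (P $$ (a,b))))"
      unfolding \<beta>_def using E1 that by (simp add: sum_distrib_left)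
    also have "\<dots> = (\<Sum>a\<le>d. V $$ (r,a) * (\<Sum>b\<le>d. of_real (P $$ (a,b))))"
      by (simp add: sum_distrib_left, subst sum.swap, simp)
    also have "\<dots> = \<beta> r" unfolding \<beta>_def using rowP by simp
    finally have "\<beta> r * (lam r - 1) = 0" by (simp add: algebra_simps)
    then show ?thesis using lam_ne1[OF that] by simp
  qed
  have pib: "complex_of_real (\<pi> b) = \<alpha> 0 * V $$ (0,b)"
  proof -
    have "complex_of_real (\<pi> b) = (\<Sum>a\<le>d. of_real (\<pi> a) * (\<Sum>r\<le>d. U $$ (a,r) * V $$ (r,b)))"
      using E3 assms(2) by (simp add: sum_delta_mult)
    also have "\<dots> = (\<Sum>r\<le>d. \<alpha> r * V $$ (r,b))"
      unfolding \<alpha>_def by (simp add: sum_distrib_left sum_distrib_right mult.assoc, subst sum.swap, simp)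
    also have "\<dots> = \<alpha> 0 * V $$ (0,b)" by (rule sum_only0) (simp add: a0)
    finally show ?thesis .
  qed
  have ua: "1 = U $$ (a,0) * \<beta> 0"
  proof -
    have "(1::complex) = (\<Sum>b\<le>d. (\<Sum>r\<le>d. U $$ (a,r) * V $$ (r,b)))"
      using E3 assms(1) by simp
    also have "\<dots> = (\<Sum>r\<le>d. U $$ (a,r) * \<beta> r)"
      unfolding \<beta>_def by (simp add: sum_distrib_left, subst sum.swap, simp)
    also have "\<dots> = U $$ (a,0) * \<beta> 0" by (rule sum_only0) (simp add: b0)
    finally show ?thesis .
  qed
  have ab: "\<alpha> 0 * \<beta> 0 = 1"
  proof -
    have "(\<Sum>r\<le>d. \<alpha> r * \<beta> r) = (\<Sum>r\<le>d. \<Sum>a\<le>d. \<Sum>b\<le>d. of_real (\<pi> a) * (U $$ (a,r) * V $$ (r,b)))"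
      unfolding \<alpha>_def \<beta>_def by (simp add: sum_product mult.assoc)
    also have "\<dots> = (\<Sum>a\<le>d. \<Sum>r\<le>d. \<Sum>b\<le>d. of_real (\<pi> a) * (U $$ (a,r) * V $$ (r,b)))"
      by (rule sum.swap)
    also have "\<dots> = (\<Sum>a\<le>d. \<Sum>b\<le>d. \<Sum>r\<le>d. of_real (\<pi> a) * (U $$ (a,r) * V $$ (r,b)))"
      by (rule sum.cong[OF refl], rule sum.swap)
    also have "\<dots> = (\<Sum>a\<le>d. of_real (\<pi> a) * (\<Sum>b\<le>d. (\<Sum>r\<le>d. U $$ (a,r) * V $$ (r,b))))"
      by (simp add: sum_distrib_left)
    also have "\<dots> = (\<Sum>a\<le>d. complex_of_real (\<pi> a))"
      by (rule sum.cong) (simp_all add: E3)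
    also have "\<dots> = complex_of_real (\<Sum>a\<le>d. \<pi> a)" by simp
    also have "\<dots> = 1" using stat unfolding stationary_dist_def by simp
    finally show ?thesis using sum_only0[of d "\<lambda>r. \<alpha> r * \<beta> r"] a0 by simp
  qed
  have "U $$ (a,0) * V $$ (0,b) = (U $$ (a,0) * \<beta> 0) * (\<alpha> 0 * V $$ (0,b))"
    using ab by (simp add: algebra_simps)
  also have "\<dots> = complex_of_real (\<pi> b)" using ua pib by simp
  finally show ?thesis .
qed

end

lemma geo:
  fixes z :: complex
  assumes "cmod z \<le> 1" "z \<noteq> 1"
  shows "cmod (\<Sum>t<W. \<Sum>m<t. z^m) \<le> (2 + W * cmod (1-z)) / cmod (1-z)^2"
proof -
  define \<delta> where "\<delta> = cmod (1 - z)"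
  have dpos: "\<delta> > 0" using assms(2) unfolding \<delta>_def by simp
  have nz: "1 - z \<noteq> 0" using assms(2) by simp
  have "(\<Sum>t<W. \<Sum>m<t. z^m) = (\<Sum>t<W. (1 - z^t) / (1 - z))"
    by (rule sum.cong[OF refl]) (simp add: geometric_sum[OF assms(2)], metis minus_diff_eq minus_divide_divide)
  also have "\<dots> = (of_nat W - (\<Sum>t<W. z^t)) / (1 - z)"
    by (simp add: sum_divide_distrib[symmetric] sum_subtractf)
  also have "\<dots> = (of_nat W - (1 - z^W) / (1 - z)) / (1 - z)"
  proof -
    have gs: "(\<Sum>t<W. z^t) = (1 - z^W)/(1-z)"
      by (simp add: geometric_sum[OF assms(2)], metis minus_diff_eq minus_divide_divide)
    show ?thesis by (simp only: gs)
  qed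
  finally have eq: "(\<Sum>t<W. \<Sum>m<t. z^m) = (of_nat W - (1 - z^W) / (1 - z)) / (1 - z)" .
  have zW: "cmod (1 - z^W) \<le> 2"
  proof -
    have "cmod (1 - z^W) \<le> cmod 1 + cmod (z^W)" by (rule norm_triangle_ineq4)
    also have "cmod (z^W) \<le> 1" using assms(1) by (simp add: norm_power power_le_one)
    finally show ?thesis by simp
  qed
  have "cmod (of_nat W - (1 - z^W) / (1 - z)) \<le> W + 2 / \<delta>"
  proof -
    have "cmod (of_nat W - (1 - z^W) / (1 - z)) \<le> cmod (of_nat W :: complex) + cmod ((1 - z^W) / (1 - z))"
      by (rule norm_triangle_ineq4)
    also have "cmod ((1 - z^W) / (1 - z)) = cmod (1 - z^W) / \<delta>" unfolding \<delta>_def by (simp add: norm_divide)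
    also have "\<dots> \<le> 2 / \<delta>" using zW dpos by (simp add: divide_right_mono)
    finally show ?thesis by simp
  qed
  then have "cmod (\<Sum>t<W. \<Sum>m<t. z^m) \<le> (W + 2 / \<delta>) / \<delta>"
    unfolding eq norm_divide \<delta>_def[symmetric] using dpos by (simp add: divide_right_mono)
  also have "\<dots> = (2 + W * \<delta>) / \<delta>^2" using dpos by (simp add: field_simps power2_eq_square)
  finally show ?thesis unfolding \<delta>_def .
qed

lemma K_mono:
  assumes "0 < a" "a \<le> b"
  shows "(2 + real W * b) / b^2 \<le> (2 + real W * a) / a^2"
proof -
  have "(2 + real W * b) / b^2 = 2 / b^2 + real W / b" using assms by (simp add: field_simps power2_eq_square)
  also have "\<dots> \<le> 2 / a^2 + real W / a"
  proof (rule add_mono)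
    show "2 / b^2 \<le> 2 / a^2" using assms by (intro divide_left_mono power_mono) auto
    show "real W / b \<le> real W / a" using assms by (intro divide_left_mono) auto
  qed
  also have "\<dots> = (2 + real W * a) / a^2" using assms by (simp add: field_simps power2_eq_square)
  finally show ?thesis .
qed

context LA begin

lemma lam_le1:
  assumes r: "r \<le> d"
  shows "cmod (lam r) \<le> 1"
proof -
  define m where "m = Max ((\<lambda>a. cmod (U $$ (a,r))) ` {..d})"
  have fin: "finite ((\<lambda>a. cmod (U $$ (a,r))) ` {..d})" by simp
  have ne: "(\<lambda>a. cmod (U $$ (a,r))) ` {..d} \<noteq> {}" by simp
  from Max_in[OF fin ne] obtain a0 where a0': "a0 \<in> {..d}" "m = cmod (U $$ (a0,r))"
    unfolding m_def by blast
  then have a0: "a0 \<le> d" "cmod (U $$ (a0,r)) = m" by auto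
  have le: "cmod (U $$ (a,r)) \<le> m" if "a \<le> d" for a
    unfolding m_def using fin that by (intro Max_ge) auto
  have mpos: "m > 0"
  proof (rule ccontr)
    assume "\<not> m > 0"
    then have m0: "m = 0" using a0(2) norm_ge_zero[of "U $$ (a0,r)"] by simp
    have "U $$ (a,r) = 0" if "a \<le> d" for a using le[OF that] m0 by simp
    then have "(\<Sum>a\<le>d. V $$ (r,a) * U $$ (a,r)) = 0" by simp
    then show False using E4[OF r r] by simp
  qed
  have Pnn: "P $$ (a,b) \<ge> 0" if "a \<le> d" "b \<le> d" for a b using st that unfolding stochastic_mat_def by auto
  have "m * cmod (lam r) = cmod (U $$ (a0,r) * lam r)" using a0 by (simp add: norm_mult)
  also have "\<dots> = cmod (\<Sum>b\<le>d. of_real (P $$ (a0,b)) * U $$ (b,r))" using E2[OF a0(1) r] by simp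
  also have "\<dots> \<le> (\<Sum>b\<le>d. cmod (of_real (P $$ (a0,b)) * U $$ (b,r)))" by (rule norm_sum)
  also have "\<dots> \<le> (\<Sum>b\<le>d. P $$ (a0,b) * m)"
  proof (rule sum_mono)
    fix b assume b: "b \<in> {..d}"
    have "cmod (of_real (P $$ (a0,b)) * U $$ (b,r)) = P $$ (a0,b) * cmod (U $$ (b,r))"
      using Pnn[OF a0(1)] b by (simp add: norm_mult)
    also have "\<dots> \<le> P $$ (a0,b) * m" using Pnn[OF a0(1)] b le by (intro mult_left_mono) auto
    finally show "cmod (of_real (P $$ (a0,b)) * U $$ (b,r)) \<le> P $$ (a0,b) * m" .
  qed
  also have "\<dots> = m" using st a0(1) unfolding stochastic_mat_def by (simp add: sum_distrib_right[symmetric])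
  finally show ?thesis using mpos by (simp add: mult_le_cancel_left1)
qed

lemma G_formula:
  assumes "j \<le> d" "i \<le> d"
  shows "complex_of_real (Pk d P k j i - \<pi> i) = (\<Sum>r=1..d. U $$ (j,r) * V $$ (r,i) * lam r ^ k)"
proof -
  have "complex_of_real (Pk d P k j i) = (\<Sum>r=0..d. U $$ (j,r) * lam r ^ k * V $$ (r,i))"
    using Pk_formula[OF assms] by (simp add: atLeast0AtMost)
  also have "\<dots> = U $$ (j,0) * lam 0 ^ k * V $$ (0,i) + (\<Sum>r=Suc 0..d. U $$ (j,r) * lam r ^ k * V $$ (r,i))"
    by (rule sum.atLeast_Suc_atMost) simp
  also have "\<dots> = of_real (\<pi> i) + (\<Sum>r=1..d. U $$ (j,r) * V $$ (r,i) * lam r ^ k)"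
    using r0_term[OF assms] lam0 by (simp add: ac_simps)
  finally show ?thesis by simp
qed

lemma S_bound:
  assumes "j \<le> d" "i \<le> d" and d1: "d \<ge> 1"
    and order: "\<forall>r\<in>{1..d}. cmod (1 - lam 1) \<le> cmod (1 - lam r)"
  shows "(\<Sum>t<W. \<Sum>m<t. Pk d P m j i - \<pi> i)
     \<le> (\<Sum>r=1..d. cmod (U $$ (j,r) * V $$ (r,i))) * ((2 + W * cmod (1 - lam 1)) / cmod (1 - lam 1)^2)"
proof -
  define K where "K = (2 + W * cmod (1 - lam 1)) / cmod (1 - lam 1)^2"
  define g where "g r = U $$ (j,r) * V $$ (r,i)" for r
  have "complex_of_real (\<Sum>t<W. \<Sum>m<t. Pk d P m j i - \<pi> i) = (\<Sum>t<W. \<Sum>m<t. \<Sum>r=1..d. g r * lam r ^ m)"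
    using G_formula[OF assms(1,2)] unfolding g_def by simp
  also have "\<dots> = (\<Sum>t<W. \<Sum>r=1..d. \<Sum>m<t. g r * lam r ^ m)"
    by (rule sum.cong[OF refl], rule sum.swap)
  also have "\<dots> = (\<Sum>r=1..d. \<Sum>t<W. \<Sum>m<t. g r * lam r ^ m)"
    by (rule sum.swap)
  also have "\<dots> = (\<Sum>r=1..d. g r * (\<Sum>t<W. \<Sum>m<t. lam r ^ m))"
    by (simp add: sum_distrib_left)
  finally have eq: "complex_of_real (\<Sum>t<W. \<Sum>m<t. Pk d P m j i - \<pi> i) = \<dots>" .
  have l1: "lam 1 \<noteq> 1" using lam_ne1[of 1] d1 by simp
  have d1pos: "cmod (1 - lam 1) > 0" using l1 by simp
  have "(\<Sum>t<W. \<Sum>m<t. Pk d P m j i - \<pi> i) \<le> cmod (complex_of_real (\<Sum>t<W. \<Sum>m<t. Pk d P m j i - \<pi> i))"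
    by (metis abs_ge_self norm_of_real)
  also have "\<dots> \<le> (\<Sum>r=1..d. cmod (g r * (\<Sum>t<W. \<Sum>m<t. lam r ^ m)))"
    unfolding eq by (rule norm_sum)
  also have "\<dots> \<le> (\<Sum>r=1..d. cmod (g r) * K)"
  proof (rule sum_mono)
    fix r assume r: "r \<in> {1..d}"
    have "cmod (\<Sum>t<W. \<Sum>m<t. lam r ^ m) \<le> (2 + W * cmod (1 - lam r)) / cmod (1 - lam r)^2"
      by (rule geo) (use r lam_le1 lam_ne1 in auto)
    also have "\<dots> \<le> K" unfolding K_def by (rule K_mono) (use d1pos order r in auto)
    finally show "cmod (g r * (\<Sum>t<W. \<Sum>m<t. lam r ^ m)) \<le> cmod (g r) * K"
      by (simp add: norm_mult mult_left_mono)
  qed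
  also have "\<dots> = (\<Sum>r=1..d. cmod (U $$ (j,r) * V $$ (r,i))) * K"
    unfolding g_def by (simp add: sum_distrib_right)
  finally show ?thesis unfolding K_def .
qed

end

lemma tc_sum: "trans_count W i j y = (\<Sum>t<W. X t i j y)"
  by (simp add: trans_count_def X_def)

lemma exp_sum: "mc_expect d P \<pi> W (\<lambda>y. \<Sum>t\<in>T. f t y) = (\<Sum>t\<in>T. mc_expect d P \<pi> W (f t))"
  unfolding mc_expect_def by (simp add: sum_distrib_left, rule sum.swap)

lemma exp_div: "mc_expect d P \<pi> W (\<lambda>y. f y / c) = mc_expect d P \<pi> W f / c"
  unfolding mc_expect_def by (simp add: sum_divide_distrib)

lemma cov_div: "mc_cov d P \<pi> W (\<lambda>y. f y / c) (\<lambda>y. g y / c) = mc_cov d P \<pi> W f g / c^2"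
proof -
  have "mc_expect d P \<pi> W (\<lambda>y. f y / c * (g y / c)) = mc_expect d P \<pi> W (\<lambda>y. f y * g y) / c^2"
    using exp_div[of d P \<pi> W "\<lambda>y. f y * g y" "c^2"] by (simp add: power2_eq_square)
  then show ?thesis unfolding mc_cov_def exp_div by (simp add: power2_eq_square diff_divide_distrib)
qed

lemma dsum:
  assumes "\<And>s t. s < W \<Longrightarrow> t < W \<Longrightarrow> D s t = (if s = t then c else if s < t then A (t-s-1) else B (s-t-1))"
  shows "(\<Sum>s<W. \<Sum>t<W. D s t) = real W * c + (\<Sum>t<W. \<Sum>m<t. A m + B m)"
  using assms
proof (induction W)
  case 0
  then show ?case by simp
next
  case (Suc W)
  have IH: "(\<Sum>s<W. \<Sum>t<W. D s t) = real W * c + (\<Sum>t<W. \<Sum>m<t. A m + B m)"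
    using Suc by simp
  have c1: "(\<Sum>s<W. D s W) = (\<Sum>m<W. A m)"
  proof -
    have "(\<Sum>s<W. D s W) = (\<Sum>s<W. A (W - Suc s))" by (rule sum.cong) (use Suc.prems in auto)
    also have "\<dots> = (\<Sum>m<W. A m)" by (rule sum.nat_diff_reindex)
    finally show ?thesis .
  qed
  have c2: "(\<Sum>t<W. D W t) = (\<Sum>m<W. B m)"
  proof -
    have "(\<Sum>t<W. D W t) = (\<Sum>t<W. B (W - Suc t))" by (rule sum.cong) (use Suc.prems in auto)
    also have "\<dots> = (\<Sum>m<W. B m)" by (rule sum.nat_diff_reindex)
    finally show ?thesis .
  qed
  have "(\<Sum>s<Suc W. \<Sum>t<Suc W. D s t) = (\<Sum>s<W. \<Sum>t<W. D s t) + (\<Sum>s<W. D s W) + (\<Sum>t<W. D W t) + D W W"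
    by (simp add: sum.distrib)
  also have "\<dots> = real (Suc W) * c + (\<Sum>t<Suc W. \<Sum>m<t. A m + B m)"
    using IH c1 c2 Suc.prems[of W W] by (simp add: sum.distrib algebra_simps)
  finally show ?case .
qed

context LA begin

definition S :: "nat \<Rightarrow> nat \<Rightarrow> nat \<Rightarrow> real" where
  "S W j i = (\<Sum>t<W. \<Sum>m<t. Pk d P m j i - \<pi> i)"

lemma cov_formula:
  assumes "i \<le> d" "j \<le> d" "j' \<le> d"
  shows "mc_cov d P \<pi> W (trans_count W i j) (trans_count W i j')
    = real W * ((if j = j' then \<pi> i * P $$ (i,j) else 0) - \<pi> i * P $$ (i,j) * (\<pi> i * P $$ (i,j')))
      + \<pi> i * P $$ (i,j) * P $$ (i,j') * (S W j i + S W j' i)"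
proof -
  let ?a = "\<pi> i * P $$ (i,j)" and ?a' = "\<pi> i * P $$ (i,j')"
  have EX: "mc_expect d P \<pi> W (X s i k) = \<pi> i * P $$ (i,k)" if "s < W" "k \<le> d" for s k
  proof -
    have "(\<lambda>y. X s i k y * X s i k y) = X s i k" by (rule ext) (simp add: X_def)
    then show ?thesis using expect_eq[OF st stat that(1) assms(1) that(2) that(2)] by simp
  qed
  have EN: "mc_expect d P \<pi> W (trans_count W i k) = real W * (\<pi> i * P $$ (i,k))" if "k \<le> d" for k
    unfolding tc_sum exp_sum using EX[OF _ that] by simp
  have ENN: "mc_expect d P \<pi> W (\<lambda>y. trans_count W i j y * trans_count W i j' y)
       = (\<Sum>s<W. \<Sum>t<W. mc_expect d P \<pi> W (\<lambda>y. X s i j y * X t i j' y))"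
    unfolding tc_sum sum_product exp_sum ..
  define Dst where "Dst s t = mc_expect d P \<pi> W (\<lambda>y. X s i j y * X t i j' y) - ?a * ?a'" for s t
  have cov: "mc_cov d P \<pi> W (trans_count W i j) (trans_count W i j') = (\<Sum>s<W. \<Sum>t<W. Dst s t)"
    unfolding mc_cov_def ENN EN[OF assms(2)] EN[OF assms(3)] Dst_def
    by (simp add: sum_subtractf)
  have Dform: "Dst s t = (if s = t then (if j = j' then ?a else 0) - ?a * ?a'
      else if s < t then \<pi> i * P $$ (i,j) * P $$ (i,j') * (Pk d P (t-s-1) j i - \<pi> i)
      else \<pi> i * P $$ (i,j) * P $$ (i,j') * (Pk d P (s-t-1) j' i - \<pi> i))"
    if "s < W" "t < W" for s t
  proof (cases "s = t")
    case True
    then show ?thesis unfolding Dst_def using expect_eq[OF st stat that(1) assms] by simp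
  next
    case False
    show ?thesis
    proof (cases "s < t")
      case True
      then show ?thesis unfolding Dst_def using False expect_lt[OF st stat True that(2) assms]
        by (simp add: algebra_simps)
    next
      case False2: False
      then have ts: "t < s" using False by simp
      have "mc_expect d P \<pi> W (\<lambda>y. X s i j y * X t i j' y) = mc_expect d P \<pi> W (\<lambda>y. X t i j' y * X s i j y)"
        by (simp add: mult.commute)
      then show ?thesis unfolding Dst_def using False False2 expect_lt[OF st stat ts that(1) assms(1,3,2)]
        by (simp add: algebra_simps)
    qed
  qed
  have "(\<Sum>s<W. \<Sum>t<W. Dst s t) = real W * ((if j = j' then ?a else 0) - ?a * ?a')
      + (\<Sum>t<W. \<Sum>m<t. \<pi> i * P $$ (i,j) * P $$ (i,j') * (Pk d P m j i - \<pi> i)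
                   + \<pi> i * P $$ (i,j) * P $$ (i,j') * (Pk d P m j' i - \<pi> i))"
    by (rule dsum) (rule Dform)
  also have "(\<Sum>t<W. \<Sum>m<t. \<pi> i * P $$ (i,j) * P $$ (i,j') * (Pk d P m j i - \<pi> i)
                   + \<pi> i * P $$ (i,j) * P $$ (i,j') * (Pk d P m j' i - \<pi> i))
     = \<pi> i * P $$ (i,j) * P $$ (i,j') * (S W j i + S W j' i)"
    unfolding S_def by (simp add: sum.distrib sum_distrib_left distrib_left)
  finally show ?thesis using cov by simp
qed

end

theorem lemma1:
  fixes d W :: nat and P :: "real mat" and \<pi> :: "nat \<Rightarrow> real"
    and U V :: "complex mat" and lam :: "nat \<Rightarrow> complex"
  assumes d: "d \<ge> 1" and W: "W \<ge> 1"
    and erg: "ergodic_mc d P"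
    and stat: "stationary_dist d P \<pi>"
    and U: "U \<in> carrier_mat (d+1) (d+1)" and V: "V \<in> carrier_mat (d+1) (d+1)"
    and UV: "U * V = 1\<^sub>m (d+1)" and VU: "V * U = 1\<^sub>m (d+1)"
    and decomp: "map_mat complex_of_real P = U * diag_cmat (d+1) lam * V"
    and simple: "inj_on lam {0..d}"
    and lam0: "lam 0 = 1"
    and order: "\<forall>r\<in>{1..d}. cmod (1 - lam 1) \<le> cmod (1 - lam r)"
  defines "c \<equiv> (\<lambda>j i. \<Sum>r=1..d. cmod (U $$ (j,r) * V $$ (r,i)))"
  shows "(\<forall>i\<le>d. \<forall>j\<le>d.
            mc_var d P \<pi> W (\<lambda>y. trans_count W i j y / W)
            \<le> \<pi> i * P $$ (i,j) * ((1 - \<pi> i * P $$ (i,j)) / W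
               + 2 * P $$ (i,j) * c j i * (2 + W * cmod (1 - lam 1)) / (W^2 * cmod (1 - lam 1)^2)))
       \<and> (\<forall>i\<le>d. \<forall>j\<le>d. \<forall>j'\<le>d. j \<noteq> j' \<longrightarrow>
            mc_cov d P \<pi> W (\<lambda>y. trans_count W i j y / W) (\<lambda>y. trans_count W i j' y / W)
            \<le> \<pi> i * P $$ (i,j) * P $$ (i,j') * (- \<pi> i / W
               + (c j i + c j' i) * (2 + W * cmod (1 - lam 1)) / (W^2 * cmod (1 - lam 1)^2)))"
proof -
  have st: "stochastic_mat d P" using erg unfolding ergodic_mc_def by simp
  interpret LA d P \<pi> U V lam
    using st stat U V UV VU decomp simple lam0 by unfold_locales
  define \<delta> where "\<delta> = cmod (1 - lam 1)"
  define K where "K = (2 + W * \<delta>) / \<delta>^2"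
  have dpos: "\<delta> > 0" using lam_ne1[of 1] d unfolding \<delta>_def by simp
  have Wpos: "real W > 0" using W by simp
  have Sb: "S W j i \<le> c j i * K" if "i \<le> d" "j \<le> d" for i j
    unfolding S_def c_def K_def \<delta>_def using S_bound[OF that(2,1) d order] by simp
  have pinn: "\<pi> i \<ge> 0" if "i \<le> d" for i using stat that unfolding stationary_dist_def by auto
  have Pnn: "P $$ (i,j) \<ge> 0" if "i \<le> d" "j \<le> d" for i j using st that unfolding stochastic_mat_def by auto
  have part1: "mc_var d P \<pi> W (\<lambda>y. trans_count W i j y / W)
            \<le> \<pi> i * P $$ (i,j) * ((1 - \<pi> i * P $$ (i,j)) / W
               + 2 * P $$ (i,j) * c j i * (2 + W * cmod (1 - lam 1)) / (W^2 * cmod (1 - lam 1)^2))"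
    if ij: "i \<le> d" "j \<le> d" for i j
  proof -
    let ?p = "P $$ (i,j)"
    have "mc_var d P \<pi> W (\<lambda>y. trans_count W i j y / W)
        = (real W * (\<pi> i * ?p - \<pi> i * ?p * (\<pi> i * ?p)) + \<pi> i * ?p * ?p * (S W j i + S W j i)) / (real W)^2"
      unfolding mc_var_def cov_div cov_formula[OF ij(1,2,2)] by simp
    also have "\<dots> \<le> (real W * (\<pi> i * ?p - \<pi> i * ?p * (\<pi> i * ?p)) + \<pi> i * ?p * ?p * (c j i * K + c j i * K)) / (real W)^2"
    proof (rule divide_right_mono[OF add_left_mono[OF mult_left_mono]])
      show "S W j i + S W j i \<le> c j i * K + c j i * K" using Sb[OF ij] by (simp add: mult.commute)
      show "0 \<le> \<pi> i * ?p * ?p" using pinn[OF ij(1)] Pnn[OF ij] by simp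
    qed simp
    also have "\<dots> = \<pi> i * P $$ (i,j) * ((1 - \<pi> i * P $$ (i,j)) / W
               + 2 * P $$ (i,j) * c j i * (2 + W * cmod (1 - lam 1)) / (W^2 * cmod (1 - lam 1)^2))"
      unfolding K_def \<delta>_def[symmetric] using Wpos dpos by (simp add: field_simps power2_eq_square)
    finally show ?thesis .
  qed
  have part2: "mc_cov d P \<pi> W (\<lambda>y. trans_count W i j y / W) (\<lambda>y. trans_count W i j' y / W)
            \<le> \<pi> i * P $$ (i,j) * P $$ (i,j') * (- \<pi> i / W
               + (c j i + c j' i) * (2 + W * cmod (1 - lam 1)) / (W^2 * cmod (1 - lam 1)^2))"
    if ij: "i \<le> d" "j \<le> d" "j' \<le> d" "j \<noteq> j'" for i j j'
  proof -
    let ?p = "P $$ (i,j)" and ?p' = "P $$ (i,j')"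
    have "mc_cov d P \<pi> W (\<lambda>y. trans_count W i j y / W) (\<lambda>y. trans_count W i j' y / W)
        = (real W * (0 - \<pi> i * ?p * (\<pi> i * ?p')) + \<pi> i * ?p * ?p' * (S W j i + S W j' i)) / (real W)^2"
      unfolding cov_div cov_formula[OF ij(1,2,3)] using ij(4) by simp
    also have "\<dots> \<le> (real W * (0 - \<pi> i * ?p * (\<pi> i * ?p')) + \<pi> i * ?p * ?p' * (c j i * K + c j' i * K)) / (real W)^2"
    proof (rule divide_right_mono[OF add_left_mono[OF mult_left_mono]])
      show "S W j i + S W j' i \<le> c j i * K + c j' i * K" using Sb[OF ij(1,2)] Sb[OF ij(1,3)] by simp
      show "0 \<le> \<pi> i * ?p * ?p'" using pinn[OF ij(1)] Pnn[OF ij(1,2)] Pnn[OF ij(1,3)] by simp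
    qed simp
    also have "\<dots> = \<pi> i * P $$ (i,j) * P $$ (i,j') * (- \<pi> i / W
               + (c j i + c j' i) * (2 + W * cmod (1 - lam 1)) / (W^2 * cmod (1 - lam 1)^2))"
      unfolding K_def \<delta>_def[symmetric] using Wpos dpos by (simp add: field_simps power2_eq_square)
    finally show ?thesis .
  qed
  show ?thesis using part1 part2 by blast
qed

end
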